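(* Let $\lambda,\mu\in DP$ with $D_\mu\subseteq D_\lambda$, let $k>1$, and let $T$ be a tableau of shape $D_{\lambda/\mu}$ such that either $c(T)_k=c(T)_{k-1}=0$ or all of the following hold: (1) there is a box $(x,y)$ with $T(x,y)=k-1$ and $T(z,y)\ne k$ for all $z>x$; (2) if $T(x,y)=k$ then there is $z<x$ with $T(z,y)=k-1$; (3) if $T(x,y)=k'$ then $T(x-1,y-1)=(k-1)'$; (4) $T^{(k-1)}$ is fitting; (5) if $c(T)_k>0$ then $T^{(k)}$ is fitting. Then $T$ is $k$-amenable.
   Context: $DP$: partitions with distinct parts (including $\emptyset$). Shifted diagram $D_\lambda=\{(i,j):1\le i\le\ell(\lambda),\ i\le j\le i+\lambda_i-1\}$ (row $i$, column $j$); $D_{\lambda/\mu}=D_\lambda\setminus D_\mu$. Alphabet $\mathcal A=\{1'<1<2'<2<\cdots\}$, $|x|$ unmarked version of a letter. A tableau of shape $D$ is $T:D\to\mathcal A$, weakly increasing along rows and down columns, each unmarked $k$ at most once per column, each marked $k'$ at most once per row; $c(T)_i$ = number of entries $i$ or $i'$. Reading word $w=w_1\cdots w_n$: rows read left to right, from bottom row to top row. $m_i(0)=0$; for $1\le j\le n$, $m_i(j)$ = number of letters $i$ in $w_{n-j+1}\cdots w_n$; for $n<j\le2n$, $m_i(j)=m_i(n)+$ number of letters $i'$ in $w_1\cdots w_{j-n}$. $w$ is $k$-amenable if (a) for $0\le j\le n-1$, $m_k(j)=m_{k-1}(j)$ implies $w_{n-j}\notin\{k,k'\}$; (b) for $n\le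 j\le2n-1$, $m_k(j)=m_{k-1}(j)$ implies $w_{j-n+1}\notin\{k-1,k'\}$; (c) if $j$ is smallest with $w_j\in\{k',k\}$ then $w_j=k$; (d) if $j$ is smallest with $w_j\in\{(k-1)',k-1\}$ then $w_j=k-1$. $T$ is $k$-amenable if $w(T)$ is. $T^{(i)}=\{(x,y):|T(x,y)|=i\}$; its components are border strips; the last box of a border strip $B$ is the $(u,v)\in B$ with $(u+1,v),(u,v-1)\notin B$, and the last box of $T^{(i)}$ is that of its leftmost component; $T^{(i)}$ is fitting if its last box contains $i$. *)

theory Defs
  imports Main
begin

text \<open>A partition with distinct parts is a strictly decreasing list of positive naturals
  (the empty list is the empty partition). Part lambda_i is lam ! (i-1).\<close>
definition DP :: "nat list \<Rightarrow> bool" where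
  "DP lam \<longleftrightarrow> sorted_wrt (>) lam \<and> 0 \<notin> set lam"

definition shifted_diagram :: "nat list \<Rightarrow> (nat \<times> nat) set" where
  "shifted_diagram lam = {(i,j). 1 \<le> i \<and> i \<le> length lam \<and> i \<le> j \<and> j < i + lam ! (i - 1)}"

text \<open>A letter is a pair (i, marked): (i, True) is i', (i, False) is i, with i \<ge> 1.
  The order 1' < 1 < 2' < 2 < ... is given by the rank 2i-1 for i', 2i for i.\<close>
type_synonym letter = "nat \<times> bool"

definition lrank :: "letter \<Rightarrow> nat" where
  "lrank a = 2 * fst a - (if snd a then 1 else 0)"

definition is_tableau :: "(nat \<times> nat) set \<Rightarrow> (nat \<times> nat \<Rightarrow> letter) \<Rightarrow> bool" where
  "is_tableau D T \<longleftrightarrow>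
     (\<forall>p\<in>D. fst (T p) \<ge> 1) \<and>
     (\<forall>x y y'. (x,y) \<in> D \<and> (x,y') \<in> D \<and> y < y' \<longrightarrow> lrank (T (x,y)) \<le> lrank (T (x,y'))) \<and>
     (\<forall>x x' y. (x,y) \<in> D \<and> (x',y) \<in> D \<and> x < x' \<longrightarrow> lrank (T (x,y)) \<le> lrank (T (x',y))) \<and>
     (\<forall>x x' y. (x,y) \<in> D \<and> (x',y) \<in> D \<and> x < x' \<and> T (x,y) = T (x',y) \<longrightarrow> snd (T (x,y))) \<and>
     (\<forall>x y y'. (x,y) \<in> D \<and> (x,y') \<in> D \<and> y < y' \<and> T (x,y) = T (x,y') \<longrightarrow> \<not> snd (T (x,y)))"

definition content :: "(nat \<times> nat) set \<Rightarrow> (nat \<times> nat \<Rightarrow> letter) \<Rightarrow> nat \<Rightarrow> nat" where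
  "content D T i = card {p \<in> D. fst (T p) = i}"

definition coord_bound :: "(nat \<times> nat) set \<Rightarrow> nat" where
  "coord_bound D = Suc (Max (insert 0 (fst ` D \<union> snd ` D)))"

definition reading_word :: "(nat \<times> nat) set \<Rightarrow> (nat \<times> nat \<Rightarrow> letter) \<Rightarrow> letter list" where
  "reading_word D T =
     (let B = coord_bound D in
      concat (map (\<lambda>x. map (\<lambda>y. T (x,y)) (filter (\<lambda>y. (x,y) \<in> D) [0..<B])) (rev [0..<B])))"

text \<open>m_i(j) for the word w of length n, 0 \<le> j \<le> 2n (w_j is w ! (j-1)).\<close>
definition mcount :: "letter list \<Rightarrow> nat \<Rightarrow> nat \<Rightarrow> nat" where
  "mcount w i j =
     (if j \<le> length w then length (filter (\<lambda>a. a = (i, False)) (drop (length w - j) w))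
      else length (filter (\<lambda>a. a = (i, False)) w)
           + length (filter (\<lambda>a. a = (i, True)) (take (j - length w) w)))"

definition amenable_word :: "nat \<Rightarrow> letter list \<Rightarrow> bool" where
  "amenable_word k w \<longleftrightarrow>
     (let n = length w in
      (\<forall>j < n. mcount w k j = mcount w (k - 1) j \<longrightarrow> fst (w ! (n - j - 1)) \<noteq> k) \<and>
      (\<forall>j. n \<le> j \<and> j < 2 * n \<longrightarrow> mcount w k j = mcount w (k - 1) j \<longrightarrow>
            w ! (j - n) \<noteq> (k - 1, False) \<and> w ! (j - n) \<noteq> (k, True)) \<and>
      (\<forall>j < n. fst (w ! j) = k \<and> (\<forall>i < j. fst (w ! i) \<noteq> k) \<longrightarrow> w ! j = (k, False)) \<and>
      (\<forall>j < n. fst (w ! j) = k - 1 \<and> (\<forall>i < j. fst (w ! i) \<noteq> k - 1) \<longrightarrow> w ! j = (k - 1, False)))"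

definition amenable_tableau :: "nat \<Rightarrow> (nat \<times> nat) set \<Rightarrow> (nat \<times> nat \<Rightarrow> letter) \<Rightarrow> bool" where
  "amenable_tableau k D T \<longleftrightarrow> amenable_word k (reading_word D T)"

definition level_set :: "(nat \<times> nat) set \<Rightarrow> (nat \<times> nat \<Rightarrow> letter) \<Rightarrow> nat \<Rightarrow> (nat \<times> nat) set" where
  "level_set D T i = {p \<in> D. fst (T p) = i}"

definition box_adj :: "nat \<times> nat \<Rightarrow> nat \<times> nat \<Rightarrow> bool" where
  "box_adj p q \<longleftrightarrow> (fst p = fst q \<and> (snd q = Suc (snd p) \<or> snd p = Suc (snd q))) \<or>
                    (snd p = snd q \<and> (fst q = Suc (fst p) \<or> fst p = Suc (fst q)))"

definition component :: "(nat \<times> nat) set \<Rightarrow> nat \<times> nat \<Rightarrow> (nat \<times> nat) set" where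
  "component S p = {q \<in> S. (\<lambda>a b. a \<in> S \<and> b \<in> S \<and> box_adj a b)\<^sup>*\<^sup>* p q}"

definition leftmost_component :: "(nat \<times> nat) set \<Rightarrow> (nat \<times> nat) set" where
  "leftmost_component S = component S (SOME p. p \<in> S \<and> snd p = Min (snd ` S))"

definition last_box :: "(nat \<times> nat) set \<Rightarrow> nat \<times> nat" where
  "last_box B = (THE p. p \<in> B \<and> (Suc (fst p), snd p) \<notin> B \<and> (fst p, snd p - 1) \<notin> B)"

definition fitting :: "(nat \<times> nat) set \<Rightarrow> (nat \<times> nat \<Rightarrow> letter) \<Rightarrow> nat \<Rightarrow> bool" where
  "fitting D T i \<longleftrightarrow> T (last_box (leftmost_component (level_set D T i))) = (i, False)"

end

theory Submission
  imports Defs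
begin


lemma sorted_gap:
  assumes "sorted_wrt (>) xs" "j < length xs" "i \<le> j"
  shows "xs!j + (j-i) \<le> xs!i"
  using assms
proof (induction j)
  case 0 then show ?case by simp
next
  case (Suc j)
  show ?case
  proof (cases "i = Suc j")
    case True then show ?thesis by simp
  next
    case False
    then have "i \<le> j" using Suc by simp
    with Suc have "xs!j + (j-i) \<le> xs!i" by simp
    moreover have "xs!(Suc j) < xs!j" using Suc.prems sorted_wrt_nth_less[of "(>)" xs j "Suc j"] by simp
    ultimately show ?thesis using \<open>i \<le> j\<close> by simp
  qed
qed

lemma lam_mono:
  assumes "DP lam" "1 \<le> a" "a \<le> a'" "a' \<le> length lam"
  shows "a' + lam!(a'-1) \<le> a + lam!(a-1)"
proof -
  have "lam!(a'-1) + ((a'-1)-(a-1)) \<le> lam!(a-1)"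
    using sorted_gap[of lam "a'-1" "a-1"] assms unfolding DP_def by simp
  then show ?thesis using assms by simp
qed

lemma SD_mem: "(i,j) \<in> shifted_diagram lam \<longleftrightarrow> 1 \<le> i \<and> i \<le> length lam \<and> i \<le> j \<and> j < i + lam ! (i - 1)"
  unfolding shifted_diagram_def by simp

lemma mu_up:
  assumes "DP mu" "(a',b) \<in> shifted_diagram mu" "1 \<le> a" "a \<le> a'" "a \<le> b"
  shows "(a,b) \<in> shifted_diagram mu"
  using assms lam_mono[of mu a a'] unfolding SD_mem by fastforce

lemma betw:
  assumes "DP lam" "DP mu"
    and "(a,b) \<in> shifted_diagram lam - shifted_diagram mu"
    and "(a',b') \<in> shifted_diagram lam - shifted_diagram mu"
    and "a \<le> a''" "a'' \<le> a'" "b \<le> b''" "b'' \<le> b'" "a'' \<le> b''"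
  shows "(a'',b'') \<in> shifted_diagram lam - shifted_diagram mu"
proof -
  have a1: "1 \<le> a" "a' \<le> length lam" "b' < a' + lam!(a'-1)" "a \<le> b"
    using assms(3,4) by (auto simp: SD_mem)
  have "a' + lam!(a'-1) \<le> a'' + lam!(a''-1)" using lam_mono[of lam a'' a'] assms a1 by simp
  then have in1: "(a'',b'') \<in> shifted_diagram lam" using a1 assms by (auto simp: SD_mem)
  have "(a'',b'') \<notin> shifted_diagram mu"
  proof
    assume "(a'',b'') \<in> shifted_diagram mu"
    then have "(a,b'') \<in> shifted_diagram mu" using mu_up[of mu a'' b'' a] assms a1 by simp
    then have "(a,b) \<in> shifted_diagram mu" using a1 assms(7) by (auto simp: SD_mem)
    then show False using assms(3) by simp
  qed
  then show ?thesis using in1 by simp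
qed

lemma letter_decode: "fst a \<ge> 1 \<Longrightarrow> a = ((lrank a + 1) div 2, odd (lrank a))"
  by (cases a) (auto simp: lrank_def)

lemma lrank_inj: "fst a \<ge> 1 \<Longrightarrow> fst b \<ge> 1 \<Longrightarrow> lrank a = lrank b \<Longrightarrow> a = b"
  using letter_decode by metis



locale stab =
  fixes lam mu :: "nat list" and T :: "nat \<times> nat \<Rightarrow> letter"
  assumes DPl: "DP lam" and DPm: "DP mu"
    and tab: "is_tableau (shifted_diagram lam - shifted_diagram mu) T"
begin

abbreviation "D \<equiv> shifted_diagram lam - shifted_diagram mu"

lemma fst_pos: "p \<in> D \<Longrightarrow> fst (T p) \<ge> 1"
  using tab unfolding is_tableau_def by blast

lemma row_le: "(x,y) \<in> D \<Longrightarrow> (x,y') \<in> D \<Longrightarrow> y \<le> y' \<Longrightarrow> lrank (T (x,y)) \<le> lrank (T (x,y'))"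
  using tab unfolding is_tableau_def by (cases "y = y'") auto

lemma col_le: "(x,y) \<in> D \<Longrightarrow> (x',y) \<in> D \<Longrightarrow> x \<le> x' \<Longrightarrow> lrank (T (x,y)) \<le> lrank (T (x',y))"
  using tab unfolding is_tableau_def by (cases "x = x'") auto

lemma row_eq: "(x,y) \<in> D \<Longrightarrow> (x,y') \<in> D \<Longrightarrow> y < y' \<Longrightarrow> T (x,y) = T (x,y') \<Longrightarrow> \<not> snd (T (x,y))"
  using tab unfolding is_tableau_def by blast

lemma col_eq: "(x,y) \<in> D \<Longrightarrow> (x',y) \<in> D \<Longrightarrow> x < x' \<Longrightarrow> T (x,y) = T (x',y) \<Longrightarrow> snd (T (x,y))"
  using tab unfolding is_tableau_def by blast

lemma D_coord: "(x,y) \<in> D \<Longrightarrow> 1 \<le> x \<and> x \<le> y"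
  by (auto simp: SD_mem)

lemma D_finite: "finite D"
proof -
  have "D \<subseteq> {0..length lam} \<times> {0..length lam + (if lam = [] then 0 else lam!0)}"
  proof
    fix p assume "p \<in> D"
    then obtain i j where p: "p = (i,j)" "(i,j) \<in> shifted_diagram lam" by (cases p) auto
    then have h: "1 \<le> i" "i \<le> length lam" "j < i + lam!(i-1)" by (auto simp: SD_mem)
    then have "i + lam!(i-1) \<le> 1 + lam!(1-1)" using lam_mono[OF DPl, of 1 i] by simp
    then show "p \<in> {0..length lam} \<times> {0..length lam + (if lam = [] then 0 else lam!0)}"
      using h p by (auto split: if_splits)
  qed
  then show ?thesis by (rule finite_subset) auto
qed

lemma mono: "(a,b) \<in> D \<Longrightarrow> (a',b') \<in> D \<Longrightarrow> a \<le> a' \<Longrightarrow> b \<le> b' \<Longrightarrow> lrank (T (a,b)) \<le> lrank (T (a',b'))"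
proof -
  assume h: "(a,b) \<in> D" "(a',b') \<in> D" "a \<le> a'" "b \<le> b'"
  have "(a,b') \<in> D" using betw[OF DPl DPm h(1) h(2), of a b'] h D_coord[OF h(1)] by simp
  then show ?thesis using row_le[OF h(1) _ h(4)] col_le[OF _ h(2) h(3)] by fastforce
qed

definition S :: "nat \<Rightarrow> (nat \<times> nat) set" where "S i = level_set D T i"

lemma S_mem: "p \<in> S i \<longleftrightarrow> p \<in> D \<and> fst (T p) = i"
  by (simp add: S_def level_set_def)

lemma S_finite: "finite (S i)"
  by (rule finite_subset[OF _ D_finite]) (auto simp: S_def level_set_def)

lemma lrank_bounds: "fst a = i \<Longrightarrow> 2*i - 1 \<le> lrank a \<and> lrank a \<le> 2*i"
  by (auto simp: lrank_def)

lemma lrank_fst: "fst a \<ge> 1 \<Longrightarrow> i \<ge> 1 \<Longrightarrow> 2*i - 1 \<le> lrank a \<Longrightarrow> lrank a \<le> 2*i \<Longrightarrow> fst a = i"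
  by (cases a) (auto simp: lrank_def split: if_splits)

lemma S_convex:
  assumes "(a,b) \<in> S i" "(a',b') \<in> S i" "(a'',b'') \<in> D"
    "a \<le> a''" "a'' \<le> a'" "b \<le> b''" "b'' \<le> b'"
  shows "(a'',b'') \<in> S i"
proof -
  have "(a,b) \<in> D" "(a',b') \<in> D" using assms by (auto simp: S_mem)
  then have "lrank (T (a,b)) \<le> lrank (T (a'',b''))" "lrank (T (a'',b'')) \<le> lrank (T (a',b'))"
    using mono assms by auto
  moreover have "i \<ge> 1" using assms(1) fst_pos by (auto simp: S_mem)
  ultimately show ?thesis using assms lrank_bounds[of "T (a,b)" i] lrank_bounds[of "T (a',b')" i]
      lrank_fst[of "T (a'',b'')" i] fst_pos
    by (auto simp: S_mem)
qed

lemma NB: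
  assumes "(a,b) \<in> S i" "(Suc a,b) \<in> S i" "(a,b-1) \<in> S i" "b \<ge> 1"
  shows False
proof -
  have D: "(a,b) \<in> D" "(Suc a,b) \<in> D" "(a,b-1) \<in> D" and F: "fst (T (a,b)) = i" "fst (T (Suc a,b)) = i"
      "fst (T (a,b-1)) = i"
    using assms by (auto simp: S_mem)
  show False
  proof (cases "snd (T (a,b))")
    case False
    have "lrank (T (a,b)) \<le> lrank (T (Suc a,b))" using col_le D by simp
    then have "T (Suc a, b) = T (a,b)" using False F fst_pos[OF D(1)]
      by (cases "T (a,b)", cases "T (Suc a,b)") (auto simp: lrank_def split: if_splits)
    then show False using col_eq[OF D(1) D(2)] False by simp
  next
    case True
    have "lrank (T (a,b-1)) \<le> lrank (T (a,b))" using row_le D by simp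
    then have "T (a, b-1) = T (a,b)" using True F fst_pos[OF D(1)]
      by (cases "T (a,b)", cases "T (a,b-1)") (auto simp: lrank_def split: if_splits)
    then show False using row_eq[OF D(3) D(1)] True assms(4) by simp
  qed
qed

end


context stab begin

lemma last_box_level:
  assumes ne: "S i \<noteq> {}"
  defines "r \<equiv> Max (fst ` S i)" and "m \<equiv> Min (snd ` S i)"
  shows "(r,m) \<in> S i \<and> last_box (leftmost_component (S i)) = (r,m)"
proof -
  let ?S = "S i"
  have fin: "finite ?S" by (rule S_finite)
  have m_min: "\<forall>p \<in> ?S. m \<le> snd p" using fin m_def by auto
  have r_max: "\<forall>p \<in> ?S. fst p \<le> r" using fin r_def by auto
  have "m \<in> snd ` ?S" using fin ne m_def by simp
  then have ex: "\<exists>p. p \<in> ?S \<and> snd p = m" by auto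
  define p0 where "p0 = (SOME p. p \<in> ?S \<and> snd p = m)"
  have p0S: "p0 \<in> ?S" "snd p0 = m" using someI_ex[OF ex] p0_def by auto
  define x0 where "x0 = fst p0"
  have p0eq: "p0 = (x0, m)" using p0S x0_def by (cases p0) auto
  define X where "X = {x. (x,m) \<in> ?S}"
  have finX: "finite X"
  proof -
    have "X \<subseteq> fst ` ?S" unfolding X_def by force
    then show ?thesis using fin finite_subset by blast
  qed
  have x0X: "x0 \<in> X" using p0S p0eq X_def by simp
  define x1 where "x1 = Max X"
  have x1S: "(x1,m) \<in> ?S" using finX x0X x1_def Max_in[of X] X_def by auto
  have x0x1: "x0 \<le> x1" using finX x0X x1_def by simp
  have x1max: "\<And>x. (x,m) \<in> ?S \<Longrightarrow> x \<le> x1" using finX x1_def X_def by simp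
  have D1: "(x1,m) \<in> D" using x1S by (simp add: S_mem)
  have D0: "(x0,m) \<in> D" using p0S p0eq by (simp add: S_mem)
  have col: "(x,m) \<in> ?S" if "x0 \<le> x" "x \<le> x1" for x
  proof -
    have "x1 \<le> m" using D_coord[OF D1] by simp
    then have "(x,m) \<in> D" using betw[OF DPl DPm D0 D1, of x m] that by simp
    then show ?thesis using S_convex[of x0 m i x1 m x m] p0S p0eq x1S that by simp
  qed
  have x1r: "x1 = r"
  proof (rule ccontr)
    assume ne1: "x1 \<noteq> r"
    have "r \<in> fst ` ?S" using fin ne r_def by simp
    then obtain b where ab: "(r,b) \<in> ?S" by auto
    have "x1 \<le> r" using r_max x1S by auto
    with ne1 have lt: "x1 < r" by simp
    have "m \<le> b" using m_min ab by auto
    moreover have "b \<noteq> m" using x1max[of r] ab lt by auto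
    ultimately have bm: "m < b" by simp
    have Dab: "(r,b) \<in> D" using ab by (simp add: S_mem)
    have mx1: "x1 \<le> m" using D_coord[OF D1] by simp
    show False
    proof (cases "Suc x1 \<le> m")
      case True
      then have "(Suc x1, m) \<in> D" using betw[OF DPl DPm D1 Dab, of "Suc x1" m] lt bm by simp
      then have "(Suc x1, m) \<in> ?S" using S_convex[of x1 m i r b "Suc x1" m] x1S ab lt bm by simp
      then show False using x1max by fastforce
    next
      case False
      then have mx: "m = x1" using mx1 by simp
      have "(x1, Suc x1) \<in> D" using betw[OF DPl DPm D1 Dab, of x1 "Suc x1"] lt bm mx by simp
      then have A1: "(x1, Suc x1) \<in> ?S" using S_convex[of x1 m i r b x1 "Suc x1"] x1S ab lt bm mx by simp
      have "(Suc x1, Suc x1) \<in> D" using betw[OF DPl DPm D1 Dab, of "Suc x1" "Suc x1"] lt bm mx by simp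
      then have A2: "(Suc x1, Suc x1) \<in> ?S" using S_convex[of x1 m i r b "Suc x1" "Suc x1"] x1S ab lt bm mx by simp
      show False using NB[OF A1 A2] x1S mx by simp
    qed
  qed
  define q where "q = (r,m)"
  have qS: "q \<in> ?S" using x1S x1r q_def by simp
  define G where "G = (\<lambda>u v. u \<in> ?S \<and> v \<in> ?S \<and> (v = (Suc (fst u), snd u) \<or>
      (v = (fst u, snd u - 1) \<and> (Suc (fst u), snd u) \<notin> ?S)))"
  have m1: "m \<ge> 1" using D_coord[OF D1] by simp
  have qsink: "\<not> G q v" for v
  proof
    assume "G q v"
    moreover have "(Suc r, m) \<notin> ?S" using r_max by fastforce
    moreover have "(r, m - 1) \<notin> ?S" using m_min m1 by fastforce
    ultimately show False unfolding G_def q_def by auto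
  qed
  have det: "v = v'" if "G u v" "G u v'" for u v v'
    using that unfolding G_def by auto
  have fwd: "G\<^sup>*\<^sup>* v q" if "G\<^sup>*\<^sup>* u q" "G u v" for u v
    using that(1)
  proof (cases rule: converse_rtranclpE)
    case base then show ?thesis using qsink that(2) by simp
  next
    case (step u') then show ?thesis using det[OF that(2)] by simp
  qed
  have adj: "G u v \<or> G v u" if "u \<in> ?S" "v \<in> ?S" "box_adj u v" for u v
  proof -
    obtain a b where u: "u = (a,b)" by (cases u)
    obtain c d where v: "v = (c,d)" by (cases v)
    have "(a,b) \<in> D" "(c,d) \<in> D" using that u v by (auto simp: S_mem)
    then have b1: "b \<ge> 1" "d \<ge> 1" using D_coord[of a b] D_coord[of c d] by auto
    have ba: "box_adj (a,b) (c,d)" using that(3) u v by simp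
    consider "a = c" "d = Suc b" | "a = c" "b = Suc d" | "b = d" "c = Suc a" | "b = d" "a = Suc c"
      using ba unfolding box_adj_def by auto
    then show ?thesis
    proof cases
      case 1
      have "(Suc c, d) \<notin> ?S" using NB[of c d i] that u v 1 by auto
      then show ?thesis using that u v 1 unfolding G_def by auto
    next
      case 2
      have "(Suc a, b) \<notin> ?S" using NB[of a b i] that u v 2 by auto
      then show ?thesis using that u v 2 unfolding G_def by auto
    next
      case 3 then show ?thesis using that u v unfolding G_def by auto
    next
      case 4 then show ?thesis using that u v unfolding G_def by auto
    qed
  qed
  have psi_step: "G\<^sup>*\<^sup>* v q" if "G\<^sup>*\<^sup>* u q" "u \<in> ?S" "v \<in> ?S" "box_adj u v" for u v
    using adj[OF that(2-4)] fwd[OF that(1)] that(1) converse_rtranclp_into_rtranclp[of G v u q]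
    by blast
  have colp: "x0 + d \<le> x1 \<Longrightarrow> G\<^sup>*\<^sup>* p0 (x0 + d, m)" for d
  proof (induction d)
    case 0 then show ?case using p0eq by simp
  next
    case (Suc d)
    then have "G\<^sup>*\<^sup>* p0 (x0 + d, m)" by simp
    moreover have "G (x0 + d, m) (x0 + Suc d, m)"
      using col[of "x0 + d"] col[of "x0 + Suc d"] Suc.prems unfolding G_def by auto
    ultimately show ?case by (rule rtranclp.rtrancl_into_rtrancl)
  qed
  have psi0: "G\<^sup>*\<^sup>* p0 q" using colp[of "x1 - x0"] x0x1 x1r q_def by simp
  let ?R = "\<lambda>a b. a \<in> ?S \<and> b \<in> ?S \<and> box_adj a b"
  have psiC: "G\<^sup>*\<^sup>* p q" if "?R\<^sup>*\<^sup>* p0 p" for p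
    using that
  proof (induction rule: rtranclp_induct)
    case base then show ?case by (rule psi0)
  next
    case (step y z) then show ?case using psi_step by blast
  qed
  have GR: "?R u v" if "G u v" for u v
  proof -
    obtain a b where u: "u = (a,b)" by (cases u)
    have "(a,b) \<in> D" using that u unfolding G_def by (auto simp: S_mem)
    then have "snd u \<ge> 1" using D_coord[of a b] u by simp
    then show ?thesis using that unfolding G_def box_adj_def by auto
  qed
  have GRs: "?R\<^sup>*\<^sup>* u v" if "G\<^sup>*\<^sup>* u v" for u v
    using that
  proof (induction rule: rtranclp_induct)
    case base then show ?case by simp
  next
    case (step y z) show ?case by (rule rtranclp.rtrancl_into_rtrancl[OF step(3) GR[OF step(2)]])
  qed
  have LC: "leftmost_component ?S = component ?S p0"
    unfolding leftmost_component_def p0_def m_def by simp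
  have qC: "q \<in> component ?S p0" using GRs[OF psi0] qS unfolding component_def by simp
  have CS: "component ?S p0 \<subseteq> ?S" unfolding component_def by auto
  have "last_box (component ?S p0) = q"
    unfolding last_box_def
  proof (rule the_equality)
    show "q \<in> component ?S p0 \<and> (Suc (fst q), snd q) \<notin> component ?S p0 \<and>
        (fst q, snd q - 1) \<notin> component ?S p0"
      using qC CS r_max m_min m1 q_def by fastforce
  next
    fix p assume P: "p \<in> component ?S p0 \<and> (Suc (fst p), snd p) \<notin> component ?S p0 \<and>
        (fst p, snd p - 1) \<notin> component ?S p0"
    then have Rp: "?R\<^sup>*\<^sup>* p0 p" and pS: "p \<in> ?S" unfolding component_def by auto
    have "G\<^sup>*\<^sup>* p q" using psiC[OF Rp] .
    then show "p = q"
    proof (cases rule: converse_rtranclpE)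
      case base then show ?thesis by simp
    next
      case (step v)
      then have "?R p v" using GR by blast
      then have "?R\<^sup>*\<^sup>* p0 v" by (rule rtranclp.rtrancl_into_rtrancl[OF Rp])
      then have "v \<in> component ?S p0" using step unfolding component_def G_def by auto
      then show ?thesis using P step(1) unfolding G_def by auto
    qed
  qed
  then show ?thesis using qS LC q_def by simp
qed

end


definition bef :: "nat \<times> nat \<Rightarrow> nat \<times> nat \<Rightarrow> bool" where
  "bef p q \<longleftrightarrow> fst q < fst p \<or> (fst p = fst q \<and> snd p < snd q)"

definition rlist :: "(nat \<times> nat) set \<Rightarrow> (nat \<times> nat) list" where
  "rlist D = (let B = coord_bound D in
      concat (map (\<lambda>x. map (\<lambda>y. (x,y)) (filter (\<lambda>y. (x,y) \<in> D) [0..<B])) (rev [0..<B])))"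

lemma rw_eq: "reading_word D T = map T (rlist D)"
  by (simp add: reading_word_def rlist_def Let_def map_concat comp_def)

lemma sorted_rows:
  "sorted_wrt bef (concat (map (\<lambda>x. map (\<lambda>y. (x,y)) (filter (P x) ys)) (rev [0..<n])))"
  if "sorted_wrt (<) ys"
proof (induction n)
  case 0 then show ?case by simp
next
  case (Suc n)
  have inner: "sorted_wrt bef (map (\<lambda>y. (n,y)) (filter (P n) ys))"
    using that by (simp add: sorted_wrt_map sorted_wrt_filter bef_def)
  have cross: "\<forall>a\<in>set (map (\<lambda>y. (n,y)) (filter (P n) ys)).
      \<forall>b\<in>set (concat (map (\<lambda>x. map (\<lambda>y. (x,y)) (filter (P x) ys)) (rev [0..<n]))). bef a b"
    by (auto simp: bef_def)
  have "sorted_wrt bef (map (\<lambda>y. (n,y)) (filter (P n) ys) @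
      concat (map (\<lambda>x. map (\<lambda>y. (x,y)) (filter (P x) ys)) (rev [0..<n])))"
    using Suc.IH inner cross by (simp only: sorted_wrt_append)
  then show ?case by simp
qed

lemma sorted_wrt_distinct': "sorted_wrt R xs \<Longrightarrow> (\<And>x. \<not> R x x) \<Longrightarrow> distinct xs"
  by (induction xs) auto

lemma rlist_sorted: "sorted_wrt bef (rlist D)"
  unfolding rlist_def Let_def by (rule sorted_rows) simp

lemma rlist_distinct: "distinct (rlist D)"
  by (rule sorted_wrt_distinct'[OF rlist_sorted]) (simp add: bef_def)

lemma rlist_set: "finite D \<Longrightarrow> set (rlist D) = D"
proof -
  assume fin: "finite D"
  have "p \<in> D \<Longrightarrow> fst p < coord_bound D \<and> snd p < coord_bound D" for p
  proof -
    assume "p \<in> D"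
    then have "fst p \<le> Max (insert 0 (fst ` D \<union> snd ` D))" "snd p \<le> Max (insert 0 (fst ` D \<union> snd ` D))"
      using fin by (auto intro!: Max_ge)
    then show ?thesis unfolding coord_bound_def by simp
  qed
  then show ?thesis unfolding rlist_def Let_def by (auto simp: image_iff)
qed

lemma count_distinct: "distinct xs \<Longrightarrow> length (filter (\<lambda>a. a = c) (map T xs)) = card {q \<in> set xs. T q = c}"
proof -
  assume "distinct xs"
  then have "card (set (filter (\<lambda>q. T q = c) xs)) = length (filter (\<lambda>q. T q = c) xs)"
    by (simp only: distinct_card distinct_filter)
  moreover have "set (filter (\<lambda>q. T q = c) xs) = {q \<in> set xs. T q = c}" by auto
  moreover have "length (filter (\<lambda>a. a = c) (map T xs)) = length (filter (\<lambda>q. T q = c) xs)"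
    by (simp add: filter_map comp_def)
  ultimately show ?thesis by simp
qed

context stab begin

abbreviation "L \<equiv> rlist D"

lemma L_set: "set L = D" using rlist_set[OF D_finite] .

lemma L_bef: "i < j \<Longrightarrow> j < length L \<Longrightarrow> bef (L!i) (L!j)"
  using sorted_wrt_nth_less[OF rlist_sorted] by blast

lemma bef_total: "p \<noteq> q \<Longrightarrow> bef p q \<or> bef q p"
  by (cases p, cases q) (auto simp: bef_def)

lemma bef_asym: "bef p q \<Longrightarrow> \<not> bef q p"
  by (auto simp: bef_def)

lemma L_drop: "p < length L \<Longrightarrow> set (drop (Suc p) L) = {q \<in> D. bef (L!p) q}"
proof -
  assume p: "p < length L"
  show ?thesis
  proof
    show "set (drop (Suc p) L) \<subseteq> {q \<in> D. bef (L!p) q}"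
    proof
      fix q assume "q \<in> set (drop (Suc p) L)"
      then obtain j where j: "j < length (drop (Suc p) L)" "drop (Suc p) L ! j = q"
        by (auto simp: in_set_conv_nth)
      then have "q = L ! (Suc p + j)" "Suc p + j < length L" by auto
      then show "q \<in> {q \<in> D. bef (L!p) q}" using L_bef[of p "Suc p + j"] L_set nth_mem by fastforce
    qed
  next
    show "{q \<in> D. bef (L!p) q} \<subseteq> set (drop (Suc p) L)"
    proof
      fix q assume q: "q \<in> {q \<in> D. bef (L!p) q}"
      have "q \<in> set L" using q L_set by auto
      then obtain j where j: "j < length L" "L!j = q" by (auto simp: in_set_conv_nth)
      have "\<not> j \<le> p"
      proof
        assume "j \<le> p"
        then consider "j = p" | "j < p" by linarith
        then show False
        proof cases
          case 1 then show False using q j by (simp add: bef_def)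
        next
          case 2 then show False using L_bef[of j p] p q j bef_asym by blast
        qed
      qed
      then have "drop (Suc p) L ! (j - Suc p) = q" "j - Suc p < length (drop (Suc p) L)" using j by auto
      then show "q \<in> set (drop (Suc p) L)" by (metis nth_mem)
    qed
  qed
qed

lemma L_take: "p < length L \<Longrightarrow> set (take p L) = {q \<in> D. bef q (L!p)}"
proof -
  assume p: "p < length L"
  show ?thesis
  proof
    show "set (take p L) \<subseteq> {q \<in> D. bef q (L!p)}"
    proof
      fix q assume "q \<in> set (take p L)"
      then obtain j where j: "j < length (take p L)" "take p L ! j = q"
        by (auto simp: in_set_conv_nth)
      then have "q = L ! j" "j < p" by auto
      then show "q \<in> {q \<in> D. bef q (L!p)}" using L_bef[of j p] p L_set nth_mem by fastforce
    qed
  next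
    show "{q \<in> D. bef q (L!p)} \<subseteq> set (take p L)"
    proof
      fix q assume q: "q \<in> {q \<in> D. bef q (L!p)}"
      have "q \<in> set L" using q L_set by auto
      then obtain j where j: "j < length L" "L!j = q" by (auto simp: in_set_conv_nth)
      have "j < p"
      proof (rule ccontr)
        assume "\<not> j < p"
        then consider "j = p" | "p < j" by linarith
        then show False
        proof cases
          case 1 then show False using q j by (simp add: bef_def)
        next
          case 2 then show False using L_bef[of p j] j q bef_asym by blast
        qed
      qed
      then have "take p L ! j = q" "j < length (take p L)" using j p by auto
      then show "q \<in> set (take p L)" by (metis nth_mem)
    qed
  qed
qed

end


lemma card_lt_inj: "finite H \<Longrightarrow> inj_on f K \<Longrightarrow> f ` K \<subseteq> H - {e} \<Longrightarrow> e \<in> H \<Longrightarrow> card K < card H"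
proof -
  assume a: "finite H" "inj_on f K" "f ` K \<subseteq> H - {e}" "e \<in> H"
  have "card K = card (f ` K)" using a(2) by (simp add: card_image)
  also have "\<dots> \<le> card (H - {e})" using a by (intro card_mono) auto
  also have "\<dots> < card H" using a by (intro card_Diff1_less) auto
  finally show ?thesis .
qed

context stab begin

lemma kprime_col:
  assumes k: "k > 1"
    and h3: "\<forall>x y. (x,y) \<in> D \<and> T (x,y) = (k,True) \<longrightarrow> (x-1,y-1) \<in> D \<and> T (x-1,y-1) = (k-1,True)"
  shows "(x,y) \<in> D \<Longrightarrow> T (x,y) = (k,True) \<Longrightarrow> \<exists>z<x. (z,y) \<in> D \<and> T (z,y) = (k-1,False)"
proof (induction x rule: less_induct)
  case (less x)
  have A: "(x-1,y-1) \<in> D" "T (x-1,y-1) = (k-1,True)" using h3 less.prems by auto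
  have c1: "1 \<le> x-1" "x-1 \<le> y-1" using D_coord[OF A(1)] by auto
  have B: "(x-1,y) \<in> D" using betw[OF DPl DPm A(1) less.prems(1), of "x-1" y] c1 by simp
  have r1: "lrank (T (x-1,y-1)) \<le> lrank (T (x-1,y))" using row_le[OF A(1) B] by simp
  have r2: "lrank (T (x-1,y)) \<le> lrank (T (x,y))" using col_le[OF B less.prems(1)] by simp
  have fp: "fst (T (x-1,y)) \<ge> 1" using fst_pos[OF B] .
  have cases3: "T (x-1,y) = (k-1,True) \<or> T (x-1,y) = (k-1,False) \<or> T (x-1,y) = (k,True)"
  proof -
    obtain i b where ib: "T (x-1,y) = (i,b)" by (cases "T (x-1,y)")
    show ?thesis using r1 r2 fp A(2) less.prems(2) k ib
      by (cases b) (auto simp: lrank_def)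
  qed
  then show ?case
  proof (elim disjE)
    assume "T (x-1,y) = (k-1,True)"
    then show ?thesis using row_eq[OF A(1) B] A(2) c1 by simp
  next
    assume "T (x-1,y) = (k-1,False)"
    then show ?thesis using B c1 by (intro exI[of _ "x-1"]) auto
  next
    assume "T (x-1,y) = (k,True)"
    then obtain z where "z < x-1" "(z,y) \<in> D" "T (z,y) = (k-1,False)" using less.IH[of "x-1"] B c1 by auto
    then show ?thesis by (intro exI[of _ z]) auto
  qed
qed

lemma partner:
  assumes h2: "\<forall>x y. (x,y) \<in> D \<and> T (x,y) = (k,False) \<longrightarrow> (\<exists>z<x. (z,y) \<in> D \<and> T (z,y) = (k-1,False))"
  shows "\<exists>f. \<forall>q. q \<in> D \<and> T q = (k,False) \<longrightarrow>
      f q \<in> D \<and> fst (f q) < fst q \<and> snd (f q) = snd q \<and> T (f q) = (k-1,False)"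
proof -
  have "\<forall>q. \<exists>p. q \<in> D \<and> T q = (k,False) \<longrightarrow>
      p \<in> D \<and> fst p < fst q \<and> snd p = snd q \<and> T p = (k-1,False)"
  proof
    fix q :: "nat \<times> nat"
    obtain x y where q: "q = (x,y)" by (cases q)
    show "\<exists>p. q \<in> D \<and> T q = (k,False) \<longrightarrow>
      p \<in> D \<and> fst p < fst q \<and> snd p = snd q \<and> T p = (k-1,False)"
    proof (cases "q \<in> D \<and> T q = (k,False)")
      case True
      then obtain z where "z < x" "(z,y) \<in> D" "T (z,y) = (k-1,False)" using h2 q by blast
      then show ?thesis using q by (intro exI[of _ "(z,y)"]) auto
    next
      case False then show ?thesis by blast
    qed
  qed
  then show ?thesis by (rule choice)
qed

lemma kU_col: "q \<in> D \<Longrightarrow> q' \<in> D \<Longrightarrow> T q = (k,False) \<Longrightarrow> T q' = (k,False) \<Longrightarrow> snd q = snd q' \<Longrightarrow> q = q'"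
proof -
  assume a: "q \<in> D" "q' \<in> D" "T q = (k,False)" "T q' = (k,False)" "snd q = snd q'"
  obtain x y where q: "q = (x,y)" by (cases q)
  obtain x' where q': "q' = (x',y)" using a(5) q by (cases q') auto
  consider "x < x'" | "x' < x" | "x = x'" by linarith
  then show ?thesis
  proof cases
    case 1 then show ?thesis using col_eq[of x y x'] a q q' by simp
  next
    case 2 then show ?thesis using col_eq[of x' y x] a q q' by simp
  next
    case 3 then show ?thesis using q q' by simp
  qed
qed

lemma unmarked_lt:
  assumes k: "k > 1"
    and h1: "\<exists>x y. (x,y) \<in> D \<and> T (x,y) = (k - 1, False) \<and> (\<forall>z > x. (z,y) \<in> D \<longrightarrow> T (z,y) \<noteq> (k, False))"
    and h2: "\<forall>x y. (x,y) \<in> D \<and> T (x,y) = (k,False) \<longrightarrow> (\<exists>z<x. (z,y) \<in> D \<and> T (z,y) = (k-1,False))"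
  shows "card {q \<in> D. T q = (k,False)} < card {q \<in> D. T q = (k-1,False)}"
proof -
  obtain f where f: "\<And>q. q \<in> D \<Longrightarrow> T q = (k,False) \<Longrightarrow>
      f q \<in> D \<and> fst (f q) < fst q \<and> snd (f q) = snd q \<and> T (f q) = (k-1,False)"
    using partner[OF h2] by blast
  obtain x y where e: "(x,y) \<in> D" "T (x,y) = (k - 1, False)" "\<forall>z > x. (z,y) \<in> D \<longrightarrow> T (z,y) \<noteq> (k, False)"
    using h1 by blast
  have inj: "inj_on f {q \<in> D. T q = (k,False)}"
  proof (rule inj_onI)
    fix q q' assume a: "q \<in> {q \<in> D. T q = (k,False)}" "q' \<in> {q \<in> D. T q = (k,False)}" "f q = f q'"
    have "snd q = snd (f q)" "snd q' = snd (f q')" using a(1,2) f[of q] f[of q'] by auto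
    then have "snd q = snd q'" using a(3) by simp
    then show "q = q'" using kU_col[of q q'] a(1,2) by auto
  qed
  have img: "f ` {q \<in> D. T q = (k,False)} \<subseteq> {q \<in> D. T q = (k-1,False)} - {(x,y)}"
  proof
    fix p assume "p \<in> f ` {q \<in> D. T q = (k,False)}"
    then obtain q where q: "q \<in> D" "T q = (k,False)" "p = f q" by auto
    have "p \<noteq> (x,y)"
    proof
      assume "p = (x,y)"
      then have "snd q = y" "x < fst q" using f[of q] q by auto
      then show False using e(3) q by (cases q) auto
    qed
    then show "p \<in> {q \<in> D. T q = (k-1,False)} - {(x,y)}" using f[of q] q by auto
  qed
  show ?thesis
  proof (rule card_lt_inj[OF _ inj img])
    show "finite {q \<in> D. T q = (k-1,False)}" by (rule finite_subset[OF _ D_finite]) auto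
  qed (use e in auto)
qed

lemma part_a:
  assumes k: "k > 1"
    and h2: "\<forall>x y. (x,y) \<in> D \<and> T (x,y) = (k,False) \<longrightarrow> (\<exists>z<x. (z,y) \<in> D \<and> T (z,y) = (k-1,False))"
    and h3: "\<forall>x y. (x,y) \<in> D \<and> T (x,y) = (k,True) \<longrightarrow> (x-1,y-1) \<in> D \<and> T (x-1,y-1) = (k-1,True)"
    and p: "p \<in> D" "fst (T p) = k"
  shows "card {q \<in> D. bef p q \<and> T q = (k,False)} < card {q \<in> D. bef p q \<and> T q = (k-1,False)}"
proof -
  obtain f where f: "\<And>q. q \<in> D \<Longrightarrow> T q = (k,False) \<Longrightarrow>
      f q \<in> D \<and> fst (f q) < fst q \<and> snd (f q) = snd q \<and> T (f q) = (k-1,False)"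
    using partner[OF h2] by blast
  let ?K = "{q \<in> D. bef p q \<and> T q = (k,False)}"
  let ?H = "{q \<in> D. bef p q \<and> T q = (k-1,False)}"
  have inj: "inj_on f ?K"
  proof (rule inj_onI)
    fix q q' assume a: "q \<in> ?K" "q' \<in> ?K" "f q = f q'"
    have "snd q = snd (f q)" "snd q' = snd (f q')" using a(1,2) f[of q] f[of q'] by auto
    then have "snd q = snd q'" using a(3) by simp
    then show "q = q'" using kU_col[of q q'] a(1,2) by auto
  qed
  have fin: "finite ?H" by (rule finite_subset[OF _ D_finite]) auto
  have fK: "f q \<in> ?H" if "q \<in> ?K" for q
  proof -
    have "f q \<in> D \<and> fst (f q) < fst q \<and> snd (f q) = snd q \<and> T (f q) = (k-1,False)"
      using f[of q] that by auto
    then show ?thesis using that by (auto simp: bef_def)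
  qed
  obtain x y where pxy: "p = (x,y)" by (cases p)
  obtain e where e: "e \<in> ?H" "\<And>q. q \<in> ?K \<Longrightarrow> f q \<noteq> e"
  proof (cases "snd (T p)")
    case False
    then have Tp: "T p = (k,False)" using p by (cases "T p") auto
    show ?thesis
    proof (rule that[of "f p"])
      show "f p \<in> ?H" using f[of p] Tp p by (auto simp: bef_def)
    next
      fix q assume q: "q \<in> ?K"
      show "f q \<noteq> f p"
      proof
        assume "f q = f p"
        moreover have "snd (f q) = snd q" "snd (f p) = snd p" using f[of q] f[of p] q Tp p by auto
        ultimately have "snd q = snd p" by simp
        then have "q = p" using kU_col q Tp p by auto
        then show False using q by (simp add: bef_def)
      qed
    qed
  next
    case True
    then have Tp: "T (x,y) = (k,True)" using p pxy by (cases "T p") auto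
    obtain z where z: "z < x" "(z,y) \<in> D" "T (z,y) = (k-1,False)"
      using kprime_col[OF k h3] p pxy Tp by blast
    show ?thesis
    proof (rule that[of "(z,y)"])
      show "(z,y) \<in> ?H" using z pxy by (simp add: bef_def)
    next
      fix q assume q: "q \<in> ?K"
      show "f q \<noteq> (z,y)"
      proof
        assume "f q = (z,y)"
        moreover have "snd (f q) = snd q" using f[of q] q by auto
        ultimately have sq: "snd q = y" by simp
        obtain x' where q': "q = (x',y)" using sq by (cases q) auto
        have "x' < x" using q q' pxy by (auto simp: bef_def)
        then have "lrank (T (x',y)) \<le> lrank (T (x,y))" using col_le[of x' y x] q q' p pxy by auto
        then show False using q q' Tp k by (simp add: lrank_def)
      qed
    qed
  qed
  have img: "f ` ?K \<subseteq> ?H - {e}"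
  proof
    fix u assume "u \<in> f ` ?K"
    then obtain q where q: "q \<in> ?K" "u = f q" by blast
    show "u \<in> ?H - {e}" using fK[OF q(1)] e(2)[OF q(1)] q(2) by blast
  qed
  show ?thesis
    by (rule card_lt_inj[OF fin inj img e(1)])
qed

lemma part_b:
  assumes k: "k > 1"
    and h3: "\<forall>x y. (x,y) \<in> D \<and> T (x,y) = (k,True) \<longrightarrow> (x-1,y-1) \<in> D \<and> T (x-1,y-1) = (k-1,True)"
    and p: "p \<in> D" "T p = (k-1,False) \<or> T p = (k,True)"
  shows "card {q \<in> D. bef q p \<and> T q = (k,True)} \<le> card {q \<in> D. bef q p \<and> T q = (k-1,True)}"
proof -
  let ?g = "\<lambda>q::nat\<times>nat. (fst q - 1, snd q - 1)"
  let ?K = "{q \<in> D. bef q p \<and> T q = (k,True)}"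
  let ?H = "{q \<in> D. bef q p \<and> T q = (k-1,True)}"
  obtain r c where prc: "p = (r,c)" by (cases p)
  have gD: "?g q \<in> D \<and> T (?g q) = (k-1,True) \<and> fst q \<ge> 2 \<and> snd q \<ge> 2" if "q \<in> ?K" for q
  proof -
    obtain x y where q: "q = (x,y)" by (cases q)
    then have "(x-1,y-1) \<in> D" "T (x-1,y-1) = (k-1,True)" using h3 that by auto
    then show ?thesis using D_coord[of "x-1" "y-1"] q by auto
  qed
  have inj: "inj_on ?g ?K"
  proof (rule inj_onI)
    fix q q' assume "q \<in> ?K" "q' \<in> ?K" "?g q = ?g q'"
    then show "q = q'" using gD[of q] gD[of q'] by (cases q, cases q') auto
  qed
  have img: "?g ` ?K \<subseteq> ?H"
  proof
    fix u assume "u \<in> ?g ` ?K"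
    then obtain q where qK: "q \<in> ?K" and u: "u = ?g q" by blast
    obtain x y where q: "q = (x,y)" by (cases q)
    have g: "(x-1,y-1) \<in> D" "T (x-1,y-1) = (k-1,True)" "x \<ge> 2" "y \<ge> 2" using gD[OF qK] q by auto
    have bq: "r < x \<or> (x = r \<and> y < c)" using qK q prc by (simp add: bef_def)
    have "bef (x-1,y-1) (r,c)"
    proof -
      consider "r < x - 1" | "r = x - 1" | "x = r" "y < c" using bq g by linarith
      then show ?thesis
      proof cases
        case 1 then show ?thesis by (simp add: bef_def)
      next
        case 2
        have "y - 1 < c"
        proof (rule ccontr)
          assume "\<not> y - 1 < c"
          then consider "y - 1 = c" | "c < y - 1" by linarith
          then show False
          proof cases
            case 1 then show False using p prc g 2 k by auto
          next
            case 3: 2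
            have "lrank (T (r,c)) \<le> lrank (T (r,y-1))" using row_le[of r c "y-1"] p prc g 2 3 by auto
            then show False using p prc g 2 k by (auto simp: lrank_def)
          qed
        qed
        then show ?thesis using 2 by (simp add: bef_def)
      next
        case 3
        have "lrank (T (r,y)) \<le> lrank (T (r,c))" using row_le[of r y c] p prc qK q 3 by auto
        moreover have "T (r,y) = (k,True)" using qK q 3 by simp
        ultimately have "T (r,c) = (k,True)" using p prc k by (auto simp: lrank_def)
        then show ?thesis using row_eq[of r y c] p prc qK q 3 by auto
      qed
    qed
    then show "u \<in> ?H" using u q g prc by simp
  qed
  have fin: "finite ?H" by (rule finite_subset[OF _ D_finite]) auto
  show ?thesis by (rule card_inj_on_le[OF inj img fin])
qed

end


context stab begin

lemma L_nth_D: "j < length L \<Longrightarrow> L!j \<in> D"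
  using L_set nth_mem by blast

lemma first_fit:
  assumes j: "j < length L" and fj: "fst (T (L!j)) = i"
    and before: "\<forall>i'<j. fst (T (L!i')) \<noteq> i" and fit: "fitting D T i"
  shows "T (L!j) = (i,False)"
proof -
  define r where "r = Max (fst ` S i)"
  define m where "m = Min (snd ` S i)"
  have jS: "L!j \<in> S i" using L_nth_D[OF j] fj by (simp add: S_mem)
  then have ne: "S i \<noteq> {}" by auto
  have lb: "(r,m) \<in> S i" "last_box (leftmost_component (S i)) = (r,m)"
    using last_box_level[OF ne] r_def m_def by auto
  have Trm: "T (r,m) = (i,False)" using fit lb(2) unfolding fitting_def S_def by simp
  have "(r,m) \<in> set L" using lb(1) L_set by (simp add: S_mem)
  then obtain j' where j': "j' < length L" "L!j' = (r,m)" by (auto simp: in_set_conv_nth)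
  have "j' = j"
  proof (rule ccontr)
    assume "j' \<noteq> j"
    then consider "j' < j" | "j < j'" by linarith
    then show False
    proof cases
      case 1 then show False using before j' lb(1) by (auto simp: S_mem)
    next
      case 2
      have "bef (L!j) (r,m)" using L_bef[OF 2 j'(1)] j'(2) by simp
      moreover have "fst (L!j) \<le> r" using jS S_finite r_def by auto
      moreover have "m \<le> snd (L!j)" using jS S_finite m_def by auto
      ultimately show False by (auto simp: bef_def)
    qed
  qed
  then show ?thesis using j' Trm by simp
qed

lemma mc_low:
  assumes "j < length L"
  shows "mcount (map T L) i j = card {q \<in> D. bef (L!(length L - j - 1)) q \<and> T q = (i,False)}"
proof -
  have e: "length L - j = Suc (length L - j - 1)" using assms by simp
  have "mcount (map T L) i j = length (filter (\<lambda>a. a = (i,False)) (map T (drop (length L - j) L)))"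
    using assms by (simp add: mcount_def drop_map)
  also have "\<dots> = card {q \<in> set (drop (length L - j) L). T q = (i,False)}"
    by (rule count_distinct) (simp add: rlist_distinct)
  also have "set (drop (length L - j) L) = {q \<in> D. bef (L!(length L - j - 1)) q}"
    using L_drop[of "length L - j - 1"] e assms by simp
  finally show ?thesis by (simp add: conj_assoc)
qed

lemma mc_high:
  assumes "length L \<le> j" "j < 2 * length L"
  shows "mcount (map T L) i j = card {q \<in> D. T q = (i,False)} +
     card {q \<in> D. bef q (L!(j - length L)) \<and> T q = (i,True)}"
proof -
  have "mcount (map T L) i j = length (filter (\<lambda>a. a = (i,False)) (map T L)) +
      length (filter (\<lambda>a. a = (i,True)) (map T (take (j - length L) L)))"
    using assms by (simp add: mcount_def take_map)
  also have "length (filter (\<lambda>a. a = (i,False)) (map T L)) = card {q \<in> set L. T q = (i,False)}"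
    by (rule count_distinct) (simp add: rlist_distinct)
  also have "length (filter (\<lambda>a. a = (i,True)) (map T (take (j - length L) L))) =
      card {q \<in> set (take (j - length L) L). T q = (i,True)}"
    by (rule count_distinct) (simp add: rlist_distinct)
  also have "set (take (j - length L) L) = {q \<in> D. bef q (L!(j - length L))}"
    using L_take[of "j - length L"] assms by simp
  finally show ?thesis using L_set by (simp add: conj_assoc)
qed

lemma content_pos: "q \<in> D \<Longrightarrow> fst (T q) = i \<Longrightarrow> content D T i > 0"
proof -
  assume "q \<in> D" "fst (T q) = i"
  moreover have "finite {p \<in> D. fst (T p) = i}" by (rule finite_subset[OF _ D_finite]) auto
  ultimately show ?thesis unfolding content_def by (simp add: card_gt_0_iff) (metis prod.collapse)
qed

lemma main_stab:
  assumes k: "k > 1"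
    and H: "(content D T k = 0 \<and> content D T (k - 1) = 0) \<or>
         ((\<exists>x y. (x,y) \<in> D \<and> T (x,y) = (k - 1, False) \<and>
                 (\<forall>z > x. (z,y) \<in> D \<longrightarrow> T (z,y) \<noteq> (k, False))) \<and>
          (\<forall>x y. (x,y) \<in> D \<and> T (x,y) = (k, False) \<longrightarrow>
                 (\<exists>z < x. (z,y) \<in> D \<and> T (z,y) = (k - 1, False))) \<and>
          (\<forall>x y. (x,y) \<in> D \<and> T (x,y) = (k, True) \<longrightarrow>
                 (x - 1, y - 1) \<in> D \<and> T (x - 1, y - 1) = (k - 1, True)) \<and>
          fitting D T (k - 1) \<and>
          (content D T k > 0 \<longrightarrow> fitting D T k))"
  shows "amenable_tableau k D T"
proof -
  let ?n = "length L"
  have w: "reading_word D T = map T L" by (rule rw_eq)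
  have nth_w: "i < ?n \<Longrightarrow> map T L ! i = T (L!i)" for i by simp
  have triv: "\<not> (q \<in> D \<and> (fst (T q) = k \<or> fst (T q) = k - 1))" if "content D T k = 0 \<and> content D T (k - 1) = 0" for q
    using content_pos[of q k] content_pos[of q "k-1"] that by auto
  have A: "\<forall>j < ?n. mcount (map T L) k j = mcount (map T L) (k - 1) j \<longrightarrow> fst (map T L ! (?n - j - 1)) \<noteq> k"
  proof (intro allI impI)
    fix j assume j: "j < ?n" and eq: "mcount (map T L) k j = mcount (map T L) (k - 1) j"
    let ?p = "L!(?n - j - 1)"
    have pD: "?p \<in> D" using L_nth_D j by simp
    show "fst (map T L ! (?n - j - 1)) \<noteq> k"
    proof
      assume f: "fst (map T L ! (?n - j - 1)) = k"
      then have fp: "fst (T ?p) = k" using j by simp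
      from H show False
      proof
        assume "content D T k = 0 \<and> content D T (k - 1) = 0"
        then show False using triv[of ?p] pD fp by blast
      next
        assume H2: "(\<exists>x y. (x,y) \<in> D \<and> T (x,y) = (k - 1, False) \<and>
                 (\<forall>z > x. (z,y) \<in> D \<longrightarrow> T (z,y) \<noteq> (k, False))) \<and>
          (\<forall>x y. (x,y) \<in> D \<and> T (x,y) = (k, False) \<longrightarrow>
                 (\<exists>z < x. (z,y) \<in> D \<and> T (z,y) = (k - 1, False))) \<and>
          (\<forall>x y. (x,y) \<in> D \<and> T (x,y) = (k, True) \<longrightarrow>
                 (x - 1, y - 1) \<in> D \<and> T (x - 1, y - 1) = (k - 1, True)) \<and>
          fitting D T (k - 1) \<and>
          (content D T k > 0 \<longrightarrow> fitting D T k)"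
        have "card {q \<in> D. bef ?p q \<and> T q = (k,False)} < card {q \<in> D. bef ?p q \<and> T q = (k-1,False)}"
          using part_a[OF k _ _ pD fp] H2 by blast
        then show False using eq mc_low[OF j, of k] mc_low[OF j, of "k-1"] by simp
      qed
    qed
  qed
  have B: "\<forall>j. ?n \<le> j \<and> j < 2 * ?n \<longrightarrow> mcount (map T L) k j = mcount (map T L) (k - 1) j \<longrightarrow>
            map T L ! (j - ?n) \<noteq> (k - 1, False) \<and> map T L ! (j - ?n) \<noteq> (k, True)"
  proof (intro allI impI)
    fix j assume j: "?n \<le> j \<and> j < 2 * ?n" and eq: "mcount (map T L) k j = mcount (map T L) (k - 1) j"
    let ?p = "L!(j - ?n)"
    have jn: "j - ?n < ?n" using j by linarith
    have pD: "?p \<in> D" using L_nth_D jn by simp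
    have wp: "map T L ! (j - ?n) = T ?p" using jn by simp
    show "map T L ! (j - ?n) \<noteq> (k - 1, False) \<and> map T L ! (j - ?n) \<noteq> (k, True)"
    proof (rule ccontr)
      assume "\<not> ?thesis"
      then have Tp: "T ?p = (k-1,False) \<or> T ?p = (k,True)" using wp by simp
      from H show False
      proof
        assume "content D T k = 0 \<and> content D T (k - 1) = 0"
        then show False using triv[of ?p] pD Tp by auto
      next
        assume H2: "(\<exists>x y. (x,y) \<in> D \<and> T (x,y) = (k - 1, False) \<and>
                 (\<forall>z > x. (z,y) \<in> D \<longrightarrow> T (z,y) \<noteq> (k, False))) \<and>
          (\<forall>x y. (x,y) \<in> D \<and> T (x,y) = (k, False) \<longrightarrow>
                 (\<exists>z < x. (z,y) \<in> D \<and> T (z,y) = (k - 1, False))) \<and>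
          (\<forall>x y. (x,y) \<in> D \<and> T (x,y) = (k, True) \<longrightarrow>
                 (x - 1, y - 1) \<in> D \<and> T (x - 1, y - 1) = (k - 1, True)) \<and>
          fitting D T (k - 1) \<and>
          (content D T k > 0 \<longrightarrow> fitting D T k)"
        have u: "card {q \<in> D. T q = (k,False)} < card {q \<in> D. T q = (k-1,False)}"
          using unmarked_lt[OF k] H2 by blast
        have b: "card {q \<in> D. bef q ?p \<and> T q = (k,True)} \<le> card {q \<in> D. bef q ?p \<and> T q = (k-1,True)}"
          using part_b[OF k _ pD Tp] H2 by blast
        show False using u b eq mc_high[of j k] mc_high[of j "k-1"] j by simp
      qed
    qed
  qed
  have CD: "fst (map T L ! j) = i \<and> (\<forall>i'<j. fst (map T L ! i') \<noteq> i) \<longrightarrow> map T L ! j = (i, False)"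
    if j: "j < ?n" and ii: "i = k \<or> i = k - 1" for j i
  proof
    assume a: "fst (map T L ! j) = i \<and> (\<forall>i'<j. fst (map T L ! i') \<noteq> i)"
    have fj: "fst (T (L!j)) = i" using a j by simp
    have bf: "\<forall>i'<j. fst (T (L!i')) \<noteq> i" using a j by auto
    have pD: "L!j \<in> D" using L_nth_D j by simp
    have fit: "fitting D T i"
      using H
    proof
      assume "content D T k = 0 \<and> content D T (k - 1) = 0"
      then show ?thesis using triv[of "L!j"] pD fj ii by auto
    next
      assume H2: "(\<exists>x y. (x,y) \<in> D \<and> T (x,y) = (k - 1, False) \<and>
                 (\<forall>z > x. (z,y) \<in> D \<longrightarrow> T (z,y) \<noteq> (k, False))) \<and>
          (\<forall>x y. (x,y) \<in> D \<and> T (x,y) = (k, False) \<longrightarrow>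
                 (\<exists>z < x. (z,y) \<in> D \<and> T (z,y) = (k - 1, False))) \<and>
          (\<forall>x y. (x,y) \<in> D \<and> T (x,y) = (k, True) \<longrightarrow>
                 (x - 1, y - 1) \<in> D \<and> T (x - 1, y - 1) = (k - 1, True)) \<and>
          fitting D T (k - 1) \<and>
          (content D T k > 0 \<longrightarrow> fitting D T k)"
      show ?thesis using ii
      proof
        assume "i = k"
        then show ?thesis using H2 content_pos[OF pD fj] by simp
      next
        assume "i = k - 1"
        then show ?thesis using H2 by simp
      qed
    qed
    show "map T L ! j = (i, False)" using first_fit[OF j fj bf fit] j by simp
  qed
  show ?thesis
    unfolding amenable_tableau_def amenable_word_def Let_def w length_map
    using A B CD by blast
qed

end
theorem corollary2p22:
  fixes lam mu :: "nat list" and k :: nat and T :: "nat \<times> nat \<Rightarrow> letter"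
  defines "D \<equiv> shifted_diagram lam - shifted_diagram mu"
  assumes "DP lam" and "DP mu" and "shifted_diagram mu \<subseteq> shifted_diagram lam"
    and "k > 1"
    and "is_tableau D T"
    and "(content D T k = 0 \<and> content D T (k - 1) = 0) \<or>
         ((\<exists>x y. (x,y) \<in> D \<and> T (x,y) = (k - 1, False) \<and>
                 (\<forall>z > x. (z,y) \<in> D \<longrightarrow> T (z,y) \<noteq> (k, False))) \<and>
          (\<forall>x y. (x,y) \<in> D \<and> T (x,y) = (k, False) \<longrightarrow>
                 (\<exists>z < x. (z,y) \<in> D \<and> T (z,y) = (k - 1, False))) \<and>
          (\<forall>x y. (x,y) \<in> D \<and> T (x,y) = (k, True) \<longrightarrow>
                 (x - 1, y - 1) \<in> D \<and> T (x - 1, y - 1) = (k - 1, True)) \<and>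
          fitting D T (k - 1) \<and>
          (content D T k > 0 \<longrightarrow> fitting D T k))"
  shows "amenable_tableau k D T"
  proof -
  have st: "stab lam mu T" unfolding stab_def using \<open>DP lam\<close> \<open>DP mu\<close> \<open>is_tableau D T\<close>
    by (simp add: D_def)
  show ?thesis using stab.main_stab[OF st \<open>k > 1\<close>] assms[unfolded D_def] unfolding D_def by blast
qed

end
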